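(* Let $D_{-}F(z)=F(z)-F(z-1)$, applied coefficientwise. Then \[ D_{-}H_B(z)=-\sum_{k=0}^{\infty}Y_{-k}(z-1)^k\,H_B(z), \] equivalently $H_B(z+1)-H_B(z)=-\sum_{k\ge0}Y_{-k}z^kH_B(z+1)$.
   Context: Normalized multiple Bernoulli polynomials: for integers $k\ge0$, $\zeta(-k|z)=-\frac{B_{k+1}(z)}{k+1}$ ($B_n(z)$ the Bernoulli polynomials, $B_n=B_n(0)$), and for $r\ge2$, $k_j\ge0$, $\zeta(-k_1,\ldots,-k_r|z)=-\frac{1}{k_r+1}\zeta(-k_1,\ldots,-k_{r-2},-k_{r-1}-k_r-1|z)-\frac12\zeta(-k_1,\ldots,-k_{r-2},-k_{r-1}-k_r|z)+\sum_{q=1}^{k_r}(-k_r)_q\frac{B_{q+1}}{(q+1)!}\zeta(-k_1,\ldots,-k_{r-2},-k_{r-1}-k_r+q|z)$, with $(a)_q=a(a+1)\cdots(a+q-1)$; the depth-zero (empty tuple) value is $1$. Let $\{Y_{-n}\}_{n\ge0}$ be non-commuting formal variables and \[ H_B(z)=\sum\zeta(-n_1,\ldots,-n_r|z)\,Y_{-n_1}\cdots Y_{-n_r}, \] the sum over all tuples (including the empty tuple, $r=0$) of non-positive integers. *)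

theory Defs
  imports Complex_Main
begin

text \<open>Bernoulli numbers with the convention B_1 = -1/2:
  B_0 = 1 and sum_{k=0}^{n} binom(n+1,k) B_k = 0 for n >= 1.\<close>
fun bernoulli_num :: "nat \<Rightarrow> complex" where
  "bernoulli_num n =
     (if n = 0 then 1
      else - (\<Sum>k<n. of_nat (Suc n choose k) * bernoulli_num k) / of_nat (Suc n))"

definition bernpoly :: "nat \<Rightarrow> complex \<Rightarrow> complex" where
  "bernpoly n z = (\<Sum>k\<le>n. of_nat (n choose k) * bernoulli_num k * z ^ (n - k))"

text \<open>Normalized multiple Bernoulli polynomials, computed on the REVERSED
  index list: mzeta_rev [k_r, k_{r-1}, ..., k_1] z = zeta(-k_1,...,-k_r | z).\<close>
fun mzeta_rev :: "nat list \<Rightarrow> complex \<Rightarrow> complex" where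
  "mzeta_rev [] z = 1"
| "mzeta_rev [k] z = - bernpoly (Suc k) z / of_nat (Suc k)"
| "mzeta_rev (kr # kr1 # rest) z =
     - (1 / of_nat (Suc kr)) * mzeta_rev ((kr1 + kr + 1) # rest) z
     - (1/2) * mzeta_rev ((kr1 + kr) # rest) z
     + (\<Sum>q\<in>{1..kr}. pochhammer (- of_nat kr) q * bernoulli_num (Suc q) / fact (Suc q)
                        * mzeta_rev ((kr1 + kr - q) # rest) z)"

text \<open>zeta(-k_1,...,-k_r | z) for ks = [k_1,...,k_r]; this is the coefficient
  of the word Y_{-k_1}...Y_{-k_r} in H_B(z).\<close>
definition mzeta :: "nat list \<Rightarrow> complex \<Rightarrow> complex" where
  "mzeta ks z = mzeta_rev (rev ks) z"

text \<open>Non-commutative formal power series in the letters Y_{-n} (n :: nat),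
  represented by their coefficient functions on words (lists of indices n).\<close>
type_synonym ncseries = "nat list \<Rightarrow> complex"

definition ncmult :: "ncseries \<Rightarrow> ncseries \<Rightarrow> ncseries" where
  "ncmult F G w = (\<Sum>i\<le>length w. F (take i w) * G (drop i w))"

definition H_B :: "complex \<Rightarrow> ncseries" where
  "H_B z = (\<lambda>w. mzeta w z)"

definition linser :: "(nat \<Rightarrow> complex) \<Rightarrow> ncseries" where
  "linser c w = (case w of [k] \<Rightarrow> c k | _ \<Rightarrow> 0)"

definition Dminus :: "(complex \<Rightarrow> ncseries) \<Rightarrow> complex \<Rightarrow> ncseries" where
  "Dminus F z = (\<lambda>w. F z w - F (z - 1) w)"

end

theory Submission imports Defs "HOL-Computational_Algebra.Formal_Power_Series" begin

abbreviation bn where "bn \<equiv> bernoulli_num"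
declare bernoulli_num.simps[simp del]

lemma bern_sum:
  assumes "n \<ge> 2"
  shows "(\<Sum>k<n. of_nat (n choose k) * bn k) = 0"
proof -
  obtain m where m: "n = Suc m" "m \<ge> 1" using assms by (cases n) auto
  have d: "bn m = - (\<Sum>k<m. of_nat (n choose k) * bn k) / of_nat n"
    using m by (subst bernoulli_num.simps) simp
  have "(\<Sum>k<n. of_nat (n choose k) * bn k) = (\<Sum>k<m. of_nat (n choose k) * bn k) + of_nat n * bn m"
    using m by simp
  also have "\<dots> = 0" unfolding d by (simp add: m(1) del: of_nat_Suc)
  finally show ?thesis .
qed

definition EB :: "complex fps" where "EB = Abs_fps (\<lambda>n. bn n / fact n)"

lemma EB_eq: "EB * (fps_exp 1 - 1) = fps_X"
proof (rule fps_ext)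
  fix n
  show "fps_nth (EB * (fps_exp 1 - 1)) n = fps_nth fps_X n"
  proof (cases "n \<ge> 2")
    case True
    have "fps_nth (EB * (fps_exp 1 - 1)) n = (\<Sum>i=0..n. bn i / fact i * (if n - i = 0 then 0 else 1 / fact (n - i)))"
      by (simp add: fps_mult_nth EB_def) (rule sum.cong, auto)
    also have "\<dots> = (\<Sum>i<n. bn i / fact i * (1 / fact (n - i)))"
      by (rule sum.mono_neutral_cong_right) auto
    also have "\<dots> = (\<Sum>i<n. of_nat (n choose i) * bn i) / fact n"
      unfolding sum_divide_distrib
      by (rule sum.cong) (auto simp: binomial_fact)
    also have "\<dots> = 0" using bern_sum[OF True] by simp
    finally show ?thesis using True by simp
  next
    case False
    then have "n = 0 \<or> n = 1" by auto
    then show ?thesis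
      by (auto simp: EB_def fps_mult_nth bernoulli_num.simps)
  qed
qed

lemma bn_even:
  assumes "n \<ge> 2" shows "(-1)^n * bn n = bn n"
proof -
  let ?R = "EB oo (- fps_X)"
  have h: "(EB * (fps_exp 1 - 1)) oo (- fps_X) = - fps_X"
    by (simp add: EB_eq)
  have "(EB * (fps_exp 1 - 1)) oo (- fps_X) = ?R * (fps_exp (-1) - 1)"
    by (simp add: fps_compose_mult_distrib fps_compose_sub_distrib)
  with h have h2: "?R * (fps_exp (-1) - 1) = - fps_X" by simp
  have ee: "fps_exp (-1) * fps_exp 1 = (1 :: complex fps)"
    by (simp flip: fps_exp_add_mult)
  have "?R * (fps_exp (-1) - 1) * fps_exp 1 = - fps_X * fps_exp 1"
    using h2 by simp
  moreover have "?R * (fps_exp (-1) - 1) * fps_exp 1 = ?R * (fps_exp (-1) * fps_exp 1 - fps_exp 1)"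
    by (simp add: algebra_simps)
  ultimately have "?R * (1 - fps_exp 1) = - fps_X * fps_exp 1"
    using ee by simp
  moreover have "?R * (fps_exp 1 - 1) = - (?R * (1 - fps_exp 1))"
    by (simp add: algebra_simps)
  ultimately have h3: "?R * (fps_exp 1 - 1) = fps_X * fps_exp 1"
    by simp
  have "(?R - EB) * (fps_exp 1 - 1) = fps_X * (fps_exp 1 - 1)"
    using h3 EB_eq by (simp add: algebra_simps)
  moreover have "fps_exp 1 - 1 \<noteq> (0 :: complex fps)"
  proof
    assume "fps_exp 1 - 1 = (0 :: complex fps)"
    then have "fps_nth (fps_exp 1 - 1) 1 = (0::complex)" by simp
    then show False by simp
  qed
  ultimately have "?R - EB = fps_X" by simp
  then have "fps_nth (?R - EB) n = fps_nth fps_X n" by simp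
  then have "(-1)^n * (bn n / fact n) - bn n / fact n = 0"
    using assms by (simp add: fps_compose_uminus' EB_def)
  then show ?thesis by (simp add: field_simps)
qed

lemma bernpoly_fps: "bernpoly n x = fact n * fps_nth (EB * fps_exp x) n"
proof -
  have "fps_nth (EB * fps_exp x) n = (\<Sum>i=0..n. bn i / fact i * (x^(n-i) / fact (n-i)))"
    by (simp add: fps_mult_nth EB_def)
  also have "\<dots> = (\<Sum>i\<le>n. of_nat (n choose i) * bn i * x^(n-i)) / fact n"
    unfolding sum_divide_distrib atLeast0AtMost
    by (rule sum.cong) (auto simp: binomial_fact)
  finally show ?thesis by (simp add: bernpoly_def)
qed

lemma bernpoly_shift:
  assumes "n \<ge> 1"
  shows "bernpoly n (x+1) - bernpoly n x = of_nat n * x^(n-1)"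
proof -
  have "EB * fps_exp (x+1) - EB * fps_exp x = EB * (fps_exp 1 - 1) * fps_exp x"
    by (simp add: fps_exp_add_mult algebra_simps)
  also have "\<dots> = fps_X * fps_exp x" by (simp add: EB_eq)
  finally have e: "EB * fps_exp (x+1) - EB * fps_exp x = fps_X * fps_exp x" .
  have "bernpoly n (x+1) - bernpoly n x = fact n * fps_nth (EB * fps_exp (x+1) - EB * fps_exp x) n"
    by (simp add: bernpoly_fps algebra_simps)
  also have "\<dots> = fact n * (x^(n-1) / fact (n-1))"
    unfolding e using assms by (cases n) (auto simp: fps_X_mult_nth)
  also have "\<dots> = of_nat n * x^(n-1)"
    using assms by (cases n) (auto simp: field_simps)
  finally show ?thesis .
qed

lemma bn1: "bn 1 = -1/2"
  by (simp add: bernoulli_num.simps)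

lemma z1: "mzeta_rev [k] z - mzeta_rev [k] (z-1) = -((z-1)^k)"
proof -
  have "bernpoly (Suc k) ((z-1)+1) - bernpoly (Suc k) (z-1) = of_nat (Suc k) * (z-1)^k"
    using bernpoly_shift[of "Suc k" "z-1"] by simp
  then have "bernpoly (Suc k) z - bernpoly (Suc k) (z-1) = of_nat (Suc k) * (z-1)^k" by simp
  then have "bernpoly (Suc k) (z-1) - bernpoly (Suc k) z = - (of_nat (Suc k) * (z-1)^k)"
    by (metis minus_diff_eq)
  then show ?thesis
    by (simp add: diff_divide_distrib[symmetric] del: of_nat_Suc)
qed

lemma coef:
  assumes "1 \<le> q" "q \<le> kr"
  shows "- (pochhammer (- of_nat kr) q * bn (Suc q) / fact (Suc q)) =
         of_nat (Suc kr choose Suc q) * bn (Suc q) / of_nat (Suc kr)"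
proof -
  have p: "pochhammer (- of_nat kr) q = (-1)^q * fact q * (of_nat (kr choose q) :: complex)"
    by (simp add: binomial_gbinomial gbinomial_pochhammer)
  have e: "(-1)^Suc q * bn (Suc q) = bn (Suc q)" using bn_even[of "Suc q"] assms by simp
  have b: "of_nat (Suc kr choose Suc q) * (of_nat (Suc q) :: complex) = of_nat (Suc kr) * of_nat (kr choose q)"
    using Suc_times_binomial[of q kr] by (metis of_nat_mult mult.commute)
  have "- (pochhammer (- of_nat kr) q * bn (Suc q) / fact (Suc q)) =
        ((-1)^Suc q * bn (Suc q)) * of_nat (kr choose q) / of_nat (Suc q)"
    unfolding p fact_Suc by (simp add: field_simps del: of_nat_Suc fact_Suc)
  also have "\<dots> = bn (Suc q) * of_nat (kr choose q) / of_nat (Suc q)" using e by simp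
  also have "\<dots> = of_nat (Suc kr choose Suc q) * bn (Suc q) / of_nat (Suc kr)"
  proof -
    have b': "of_nat (Suc kr choose Suc q) = of_nat (Suc kr) * of_nat (kr choose q) / (of_nat (Suc q)::complex)"
      using b by (simp add: eq_divide_eq del: of_nat_Suc)
    have nz: "(of_nat (Suc kr)::complex) \<noteq> 0" "(of_nat (Suc q)::complex) \<noteq> 0"
      by (simp_all only: of_nat_eq_0_iff)
    show ?thesis unfolding b' using nz by (simp add: field_simps del: of_nat_Suc)
  qed
  finally show ?thesis .
qed

lemma z2: "mzeta_rev [kr, k] z - mzeta_rev [kr, k] (z-1) = -((z-1)^k) * mzeta_rev [kr] z"
proof -
  define y where "y = z - 1"
  have zy: "z = y + 1" by (simp add: y_def)
  define c where "c q = pochhammer (- of_nat kr) q * bn (Suc q) / fact (Suc q)" for q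
  have "mzeta_rev [kr, k] z - mzeta_rev [kr, k] (z-1) =
     - (1 / of_nat (Suc kr)) * (mzeta_rev [k+kr+1] z - mzeta_rev [k+kr+1] (z-1))
     - (1/2) * (mzeta_rev [k+kr] z - mzeta_rev [k+kr] (z-1))
     + (\<Sum>q\<in>{1..kr}. c q * (mzeta_rev [k+kr-q] z - mzeta_rev [k+kr-q] (z-1)))"
  proof -
    have "(\<Sum>q\<in>{1..kr}. c q * (mzeta_rev [k+kr-q] z - mzeta_rev [k+kr-q] (z-1))) =
      (\<Sum>q\<in>{1..kr}. c q * mzeta_rev [k+kr-q] z) - (\<Sum>q\<in>{1..kr}. c q * mzeta_rev [k+kr-q] (z-1))"
      by (simp add: right_diff_distrib sum_subtractf del: mzeta_rev.simps(2))
    note hs = this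
    show ?thesis
      unfolding mzeta_rev.simps(3) c_def[symmetric] hs
      by (simp add: algebra_simps del: mzeta_rev.simps)
  qed
  also have "\<dots> = y^(k+kr+1) / of_nat (Suc kr) + y^(k+kr)/2 - (\<Sum>q\<in>{1..kr}. c q * y^(k+kr-q))"
    unfolding z1 y_def by (simp add: sum_negf)
  also have "\<dots> = y^k * (y^(Suc kr) / of_nat (Suc kr) + y^kr/2 + (\<Sum>q\<in>{1..kr}. (- c q) * y^(kr-q)))"
  proof -
    have "(\<Sum>q\<in>{1..kr}. c q * y^(k+kr-q)) = y^k * (\<Sum>q\<in>{1..kr}. c q * y^(kr-q))"
      unfolding sum_distrib_left
      by (rule sum.cong) (auto simp: power_add[symmetric])
    then show ?thesis by (simp add: algebra_simps power_add sum_negf)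
  qed
  also have "\<dots> = y^k * (bernpoly (Suc kr) (y+1) / of_nat (Suc kr))"
  proof -
    have s: "bernpoly (Suc kr) y = (\<Sum>j\<le>Suc kr. of_nat (Suc kr choose j) * bn j * y^(Suc kr - j))"
      by (simp add: bernpoly_def)
    have s2: "(\<Sum>j\<le>Suc kr. of_nat (Suc kr choose j) * bn j * y^(Suc kr - j)) =
       y^(Suc kr) + of_nat (Suc kr) * bn 1 * y^kr +
       (\<Sum>q\<in>{1..kr}. of_nat (Suc kr choose Suc q) * bn (Suc q) * y^(kr - q))"
    proof -
      have "{..kr} = insert 0 {1..kr}" by auto
      then have "(\<Sum>i\<le>kr. of_nat (Suc kr choose Suc i) * bn (Suc i) * y^(Suc kr - Suc i)) =
          of_nat (Suc kr) * bn 1 * y^kr + (\<Sum>q\<in>{1..kr}. of_nat (Suc kr choose Suc q) * bn (Suc q) * y^(kr - q))"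
        by simp
      then show ?thesis
        by (subst sum.atMost_Suc_shift) (simp add: bernoulli_num.simps[of 0])
    qed
    have sh: "bernpoly (Suc kr) (y+1) = bernpoly (Suc kr) y + of_nat (Suc kr) * y^kr"
      using bernpoly_shift[of "Suc kr" y] by (simp add: algebra_simps)
    have cs: "(\<Sum>q\<in>{1..kr}. (- c q) * y^(kr-q)) =
       (\<Sum>q\<in>{1..kr}. of_nat (Suc kr choose Suc q) * bn (Suc q) * y^(kr - q)) / of_nat (Suc kr)"
      unfolding sum_divide_distrib
    proof (rule sum.cong)
      fix q assume "q \<in> {1..kr}"
      then have "- c q = of_nat (Suc kr choose Suc q) * bn (Suc q) / of_nat (Suc kr)"
        using coef[of q kr] by (simp add: c_def)
      then show "- c q * y^(kr-q) = of_nat (Suc kr choose Suc q) * bn (Suc q) * y^(kr - q) / of_nat (Suc kr)"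
        by simp
    qed simp
    have gen: "\<And>(Y::complex) P T n. n \<noteq> 0 \<Longrightarrow>
        Y * (y*P/n + P/2 + T/n) = Y * ((y*P + n*(-1/2)*P + T + n*P)/n)"
      by (simp add: field_simps)
    show ?thesis
      unfolding sh s s2 cs bn1 power_Suc
      by (rule gen) (metis Zero_not_Suc of_nat_Suc of_nat_eq_0_iff)
  qed
  also have "\<dots> = -((z-1)^k) * mzeta_rev [kr] z"
    by (simp add: y_def)
  finally show ?thesis .
qed


lemma mainL: "mzeta_rev (xs @ [k]) z - mzeta_rev (xs @ [k]) (z-1) = -((z-1)^k) * mzeta_rev xs z"
proof (induction xs z rule: mzeta_rev.induct)
  case (1 z)
  then show ?case using z1 by simp
next
  case (2 kr z)
  then show ?case using z2 by simp
next
  case (3 kr kr1 rest z)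
  define c where "c q = pochhammer (- of_nat kr) q * bn (Suc q) / fact (Suc q)" for q
  let ?D = "\<lambda>m. mzeta_rev (m # rest @ [k]) z - mzeta_rev (m # rest @ [k]) (z-1)"
  let ?Y = "-((z-1)^k)"
  have i1: "?D (kr1+kr+1) = ?Y * mzeta_rev ((kr1+kr+1)#rest) z" using "3.IH"(1) by simp
  have i2: "?D (kr1+kr) = ?Y * mzeta_rev ((kr1+kr)#rest) z" using "3.IH"(2) by simp
  have i3: "q \<in> {1..kr} \<Longrightarrow> ?D (kr1+kr-q) = ?Y * mzeta_rev ((kr1+kr-q)#rest) z" for q
    using "3.IH"(3)[of q] by simp
  have hs: "(\<Sum>q\<in>{1..kr}. c q * mzeta_rev ((kr1+kr-q) # rest @ [k]) z) -
      (\<Sum>q\<in>{1..kr}. c q * mzeta_rev ((kr1+kr-q) # rest @ [k]) (z-1)) =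
      (\<Sum>q\<in>{1..kr}. c q * ?D (kr1+kr-q))"
    by (simp add: right_diff_distrib sum_subtractf del: mzeta_rev.simps)
  also have "\<dots> = ?Y * (\<Sum>q\<in>{1..kr}. c q * mzeta_rev ((kr1+kr-q)#rest) z)"
    unfolding sum_distrib_left by (rule sum.cong) (simp_all add: i3 del: mzeta_rev.simps)
  finally have hs2: "(\<Sum>q\<in>{1..kr}. c q * mzeta_rev ((kr1+kr-q) # rest @ [k]) z) -
      (\<Sum>q\<in>{1..kr}. c q * mzeta_rev ((kr1+kr-q) # rest @ [k]) (z-1)) =
      ?Y * (\<Sum>q\<in>{1..kr}. c q * mzeta_rev ((kr1+kr-q)#rest) z)" .
  have "mzeta_rev ((kr # kr1 # rest) @ [k]) z - mzeta_rev ((kr # kr1 # rest) @ [k]) (z-1)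
     = - (1 / of_nat (Suc kr)) * ?D (kr1+kr+1) - (1/2) * ?D (kr1+kr)
       + ((\<Sum>q\<in>{1..kr}. c q * mzeta_rev ((kr1+kr-q) # rest @ [k]) z) -
      (\<Sum>q\<in>{1..kr}. c q * mzeta_rev ((kr1+kr-q) # rest @ [k]) (z-1)))"
    unfolding append_Cons mzeta_rev.simps(3) c_def[symmetric]
    by (simp add: algebra_simps del: mzeta_rev.simps)
  also have "\<dots> = ?Y * mzeta_rev (kr # kr1 # rest) z"
    unfolding hs2 i1 i2 mzeta_rev.simps(3) c_def[symmetric]
    by (simp add: algebra_simps del: mzeta_rev.simps)
  finally show ?case .
qed

theorem theoremC:
  fixes z :: complex
  shows "Dminus H_B z = (\<lambda>w. - ncmult (linser (\<lambda>k. (z - 1) ^ k)) (H_B z) w)"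
proof (rule ext)
  fix w :: "nat list"
  show "Dminus H_B z w = - ncmult (linser (\<lambda>k. (z - 1) ^ k)) (H_B z) w"
  proof (cases w)
    case Nil
    then show ?thesis by (simp add: Dminus_def H_B_def mzeta_def ncmult_def linser_def)
  next
    case (Cons k ws)
    let ?f = "\<lambda>i. linser (\<lambda>k. (z - 1) ^ k) (take i w) * H_B z (drop i w)"
    have "ncmult (linser (\<lambda>k. (z - 1) ^ k)) (H_B z) w = (\<Sum>i\<le>Suc (length ws). ?f i)"
      by (simp add: ncmult_def Cons)
    also have "\<dots> = ?f 0 + (\<Sum>i\<le>length ws. ?f (Suc i))"
      by (rule sum.atMost_Suc_shift)
    also have "(\<Sum>i\<le>length ws. ?f (Suc i)) = (\<Sum>i\<in>{0}. ?f (Suc i))"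
      by (rule sum.mono_neutral_right) (auto simp: Cons linser_def split: list.splits)
    finally have C: "ncmult (linser (\<lambda>k. (z - 1) ^ k)) (H_B z) w = ?f 0 + (\<Sum>i\<in>{0}. ?f (Suc i))" .
    have f0: "?f 0 = 0" by (simp add: linser_def)
    have f1: "?f (Suc 0) = (z-1)^k * mzeta ws z" by (simp add: linser_def Cons H_B_def)
    have "ncmult (linser (\<lambda>k. (z - 1) ^ k)) (H_B z) w = (z-1)^k * mzeta ws z"
      unfolding C f0 f1[symmetric] by simp
    moreover have "Dminus H_B z w = -((z-1)^k) * mzeta ws z"
      using mainL[of "rev ws" k z] by (simp add: Dminus_def H_B_def mzeta_def Cons)
    ultimately show ?thesis by simp
  qed
qed

end
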